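(* For any cluster decomposition $\mathbf z=\sum\mathbf z_i$ and any $i\neq j$, $\mathrm{sep}(\mathbf z_i,\mathbf z_j)>2(r_{|\mathbf z_i|}+r_{|\mathbf z_j|})$.
   Context: $M$ is a smooth Riemannian manifold with distance $\mathrm{dist}$, with $r_{conv}>0$ the infimum of the convexity radius. Configurations lie in $\mathrm{Sym}^n(M)$ (unordered tuples with multiplicity), $|\mathbf z|$ is the number of points, $+$ is union with multiplicity, and $\mathrm{sep}(\mathbf z_1,\mathbf z_2)=\min_{z\in\mathbf z_1,w\in\mathbf z_2}\mathrm{dist}(z,w)$. $\mathbf z$ is pre-confined if $\mathrm{dist}(z_i,z_j)<r_{conv}$ for all $i,j$; then $c(\mathbf z)$ is the unique minimizer of $\sum_i\mathrm{dist}(z_i,z)^2$ on $\bigcap_iB_\rho(z_i)$ for $\max\mathrm{dist}(z_i,z_j)<\rho<r_{conv}$, and $r(\mathbf z)=\max_i\mathrm{dist}(z_i,c(\mathbf z))$. A fixed clustering rule is $0<r_1<\dots<r_N\ll r_{conv}$, $0=d_1<\dots<d_N\ll r_{conv}$ with $r_k>d_k+r_{k-1}$, $d_k>6r_{k-1}$. $\mathbf z$ is confined if pre-confined and $r(\mathbf z)<r_{|\mathbf z|}$; $\mathbf z_1,\mathbf z_2$ are separated if pre-confined with $\mathrm{dist}(c(\mathbf z_1),c(\mathbf z_2))>d_{|\mathbf z_1|+|\mathbf z_2|}$; a cluster decomposition $\mathbf z=\sum\mathbf z_i$ has all parts confined and every pair of distinct parts separated. *)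

theory Defs
  imports "HOL-Analysis.Analysis" "HOL-Library.Multiset"
begin

text \<open>Configurations in Sym^n(M) are multisets; |z| = size z; + is multiset union.
  The ambient space is an arbitrary metric space (the Riemannian distance of M
  makes M a metric space); rconv plays the role of the infimum of the convexity radius.\<close>

definition pre_confined :: "real \<Rightarrow> 'a::metric_space multiset \<Rightarrow> bool" where
  "pre_confined rconv z \<longleftrightarrow> (\<forall>a\<in>#z. \<forall>b\<in>#z. dist a b < rconv)"

definition ball_inter :: "'a::metric_space multiset \<Rightarrow> real \<Rightarrow> 'a set" where
  "ball_inter z \<rho> = {p. \<forall>a\<in>#z. dist a p < \<rho>}"

definition sqdist_sum :: "'a::metric_space multiset \<Rightarrow> 'a \<Rightarrow> real" where
  "sqdist_sum z p = sum_mset (image_mset (\<lambda>a. (dist a p)^2) z)"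

definition center :: "real \<Rightarrow> 'a::metric_space multiset \<Rightarrow> 'a" where
  "center rconv z = (THE p. \<forall>\<rho>. (\<forall>a\<in>#z. \<forall>b\<in>#z. dist a b < \<rho>) \<and> \<rho> < rconv \<longrightarrow>
       p \<in> ball_inter z \<rho> \<and> (\<forall>q\<in>ball_inter z \<rho>. q \<noteq> p \<longrightarrow> sqdist_sum z p < sqdist_sum z q))"

definition radius :: "real \<Rightarrow> 'a::metric_space multiset \<Rightarrow> real" where
  "radius rconv z = Max ((\<lambda>a. dist a (center rconv z)) ` set_mset z)"

definition sep :: "'a::metric_space multiset \<Rightarrow> 'a multiset \<Rightarrow> real" where
  "sep z1 z2 = Min {dist a b | a b. a \<in># z1 \<and> b \<in># z2}"

definition clustering_rule :: "real \<Rightarrow> nat \<Rightarrow> (nat \<Rightarrow> real) \<Rightarrow> (nat \<Rightarrow> real) \<Rightarrow> bool" where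
  "clustering_rule rconv N r d \<longleftrightarrow> 0 < rconv \<and> 1 \<le> N \<and>
     0 < r 1 \<and> d 1 = 0 \<and> r N < rconv \<and> d N < rconv \<and>
     (\<forall>k. 2 \<le> k \<and> k \<le> N \<longrightarrow> r (k-1) < r k \<and> d (k-1) < d k
          \<and> r k > d k + r (k-1) \<and> d k > 6 * r (k-1))"

definition confined :: "real \<Rightarrow> (nat \<Rightarrow> real) \<Rightarrow> 'a::metric_space multiset \<Rightarrow> bool" where
  "confined rconv r z \<longleftrightarrow> pre_confined rconv z \<and> radius rconv z < r (size z)"

definition separated :: "real \<Rightarrow> (nat \<Rightarrow> real) \<Rightarrow> 'a::metric_space multiset \<Rightarrow> 'a multiset \<Rightarrow> bool" where
  "separated rconv d z1 z2 \<longleftrightarrow> pre_confined rconv z1 \<and> pre_confined rconv z2 \<and>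
     dist (center rconv z1) (center rconv z2) > d (size z1 + size z2)"

definition cluster_decomposition ::
  "real \<Rightarrow> (nat \<Rightarrow> real) \<Rightarrow> (nat \<Rightarrow> real) \<Rightarrow> 'a::metric_space multiset \<Rightarrow> 'a multiset list \<Rightarrow> bool" where
  "cluster_decomposition rconv r d z zs \<longleftrightarrow> z = sum_list zs \<and>
     (\<forall>i<length zs. zs!i \<noteq> {#} \<and> confined rconv r (zs!i)) \<and>
     (\<forall>i<length zs. \<forall>j<length zs. i \<noteq> j \<longrightarrow> separated rconv d (zs!i) (zs!j))"

end

theory Submission
  imports Defs
begin

lemma r_mono_aux:
  assumes "clustering_rule rconv N r d" "1 \<le> a"
  shows "a + m \<le> N \<Longrightarrow> r a \<le> r (a + m)"
proof (induction m)
  case 0 then show ?case by simp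
next
  case (Suc m)
  have "2 \<le> Suc (a + m)" "Suc (a+m) \<le> N" using Suc.prems assms(2) by auto
  then have "r (a+m) < r (Suc (a+m))" using assms(1) unfolding clustering_rule_def
    by (metis diff_Suc_1)
  then show ?case using Suc by simp
qed

lemma r_mono:
  assumes "clustering_rule rconv N r d" "1 \<le> a" "a \<le> b" "b \<le> N"
  shows "r a \<le> r b"
  using r_mono_aux[OF assms(1,2), of "b - a"] assms by simp

lemma dist_center_le:
  assumes "a \<in># z" "radius rconv z < R"
  shows "dist a (center rconv z) < R"
proof -
  have "dist a (center rconv z) \<le> radius rconv z"
    unfolding radius_def using assms(1) by (intro Max_ge) auto
  then show ?thesis using assms(2) by simp
qed

lemma size_two_le:
  fixes zs :: "'a multiset list"
  assumes "i < length zs" "j < length zs" "i \<noteq> j"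
  shows "size (zs!i) + size (zs!j) \<le> size (sum_list zs)"
proof -
  have "size (sum_list zs) = sum_list (map size zs)"
    by (induction zs) (auto simp: size_union)
  also have "\<dots> = (\<Sum>k<length zs. size (zs!k))"
    by (simp add: sum_list_sum_nth atLeast0LessThan)
  finally have e: "size (sum_list zs) = (\<Sum>k<length zs. size (zs!k))" .
  have "(\<Sum>k\<in>{i,j}. size (zs!k)) \<le> (\<Sum>k<length zs. size (zs!k))"
    using assms by (intro sum_mono2) auto
  then show ?thesis using e assms(3) by simp
qed

lemma arith_aux:
  fixes C x p q ra rb R D :: real
  assumes "C \<le> p + x + q" "p < ra" "q < rb" "D < C" "6 * R < D" "ra \<le> R" "rb \<le> R"
  shows "2 * (ra + rb) < x"
  using assms by (smt (verit))

theorem lemma2p10: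
  fixes rconv :: real and N :: nat and r d :: "nat \<Rightarrow> real"
    and z :: "'a::metric_space multiset" and zs :: "'a multiset list"
  assumes "clustering_rule rconv N r d"
    and "size z \<le> N"
    and "cluster_decomposition rconv r d z zs"
    and "i < length zs" and "j < length zs" and "i \<noteq> j"
  shows "sep (zs!i) (zs!j) > 2 * (r (size (zs!i)) + r (size (zs!j)))"
proof -
  let ?A = "zs!i" and ?B = "zs!j"
  let ?n = "size ?A + size ?B"
  have cd: "z = sum_list zs" "?A \<noteq> {#}" "?B \<noteq> {#}" "confined rconv r ?A" "confined rconv r ?B"
     "separated rconv d ?A ?B"
    using assms(3-6) unfolding cluster_decomposition_def by auto
  have nA: "1 \<le> size ?A" "1 \<le> size ?B" using cd(2,3) by (auto simp: Suc_le_eq nonempty_has_size)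
  have nN: "?n \<le> N" using size_two_le[OF assms(4-6)] cd(1) assms(2) by simp
  have d6: "d ?n > 6 * r (?n - 1)"
    using assms(1) nA nN unfolding clustering_rule_def by auto
  have rA: "r (size ?A) \<le> r (?n - 1)" using r_mono[OF assms(1) nA(1)] nA nN by simp
  have rB: "r (size ?B) \<le> r (?n - 1)" using r_mono[OF assms(1) nA(2)] nA nN by simp
  have dc: "dist (center rconv ?A) (center rconv ?B) > d ?n"
    using cd(6) unfolding separated_def by simp
  have radA: "radius rconv ?A < r (size ?A)" and radB: "radius rconv ?B < r (size ?B)"
    using cd(4,5) unfolding confined_def by auto
  let ?S = "{dist a b | a b. a \<in># ?A \<and> b \<in># ?B}"
  have S_eq: "?S = (\<lambda>(a,b). dist a b) ` (set_mset ?A \<times> set_mset ?B)" by auto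
  have fin: "finite ?S" unfolding S_eq by simp
  have ne: "?S \<noteq> {}" using cd(2,3) unfolding S_eq by auto
  have all: "\<forall>x\<in>?S. x > 2 * (r (size ?A) + r (size ?B))"
  proof
    fix x assume "x \<in> ?S"
    then obtain a b where ab: "a \<in># ?A" "b \<in># ?B" "x = dist a b" by auto
    have 1: "dist a (center rconv ?A) < r (size ?A)" using dist_center_le[OF ab(1) radA] .
    have 2: "dist b (center rconv ?B) < r (size ?B)" using dist_center_le[OF ab(2) radB] .
    have "dist (center rconv ?A) (center rconv ?B) \<le>
        dist a (center rconv ?A) + dist a b + dist b (center rconv ?B)"
      by (metis add.commute add_mono_thms_linordered_semiring(3) dist_commute dist_triangle order_trans)
    obtain R where R: "R = r (?n - 1)" by simp
    then show "x > 2 * (r (size ?A) + r (size ?B))" using arith_aux[OF \<open>dist _ _ \<le> _\<close> 1 2 dc d6 rA rB] ab(3) by simp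
  qed
  show ?thesis unfolding sep_def using all fin ne by (simp add: Min_gr_iff)
qed

end
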